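(* Let $(K,v)$ be an extremal valued field with value group $\Gamma$. Then $\Gamma$ is divisible or a $\mathbb{Z}$-group.
   Context: $(K,v)$ with valuation ring $\mathcal{O}_v$ and value group $\Gamma$ (and $v(0)=\infty$) is extremal if for every $n\ge1$ and every $F\in K[X_1,\dots,X_n]$ the set $\{v(F(a_1,\dots,a_n)) : a_i\in\mathcal{O}_v\}\subseteq\Gamma\cup\{\infty\}$ has a maximal element. An ordered abelian group is regular if for every $n\ge1$ every open interval containing at least $n$ elements contains an $n$-divisible element; a $\mathbb{Z}$-group is a regular ordered abelian group with a smallest positive element. *)

theory Defs
  imports Main
begin

text \<open>A (Krull) valuation on a field 'k with value group the whole ordered abelian
group 'g. The value v 0 is irrelevant (junk); v(0) = \<infinity> is treated
explicitly via vext below.\<close>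
definition valuation :: "('k::field \<Rightarrow> 'g::linordered_ab_group_add) \<Rightarrow> bool" where
  "valuation v \<longleftrightarrow>
     (\<forall>x y. x \<noteq> 0 \<longrightarrow> y \<noteq> 0 \<longrightarrow> v (x * y) = v x + v y) \<and>
     (\<forall>x y. x \<noteq> 0 \<longrightarrow> y \<noteq> 0 \<longrightarrow> x + y \<noteq> 0 \<longrightarrow> min (v x) (v y) \<le> v (x + y)) \<and>
     v ` {x. x \<noteq> 0} = UNIV"

definition val_ring :: "('k::field \<Rightarrow> 'g::linordered_ab_group_add) \<Rightarrow> 'k set" where
  "val_ring v = {x. x = 0 \<or> 0 \<le> v x}"

text \<open>Extended valuation into Gamma \<union> {\<infinity>}: None represents \<infinity>.\<close>
definition vext :: "('k::field \<Rightarrow> 'g) \<Rightarrow> 'k \<Rightarrow> 'g option" where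
  "vext v x = (if x = 0 then None else Some (v x))"

definition ext_le :: "'g::linorder option \<Rightarrow> 'g option \<Rightarrow> bool" where
  "ext_le x y = (case y of None \<Rightarrow> True
                 | Some b \<Rightarrow> (case x of None \<Rightarrow> False | Some a \<Rightarrow> a \<le> b))"

text \<open>Polynomial functions K^n \<rightarrow> K in the variables X_0,...,X_{n-1}
(points are functions nat \<Rightarrow> 'k; only coordinates < n matter).\<close>
inductive_set poly_fun :: "nat \<Rightarrow> ((nat \<Rightarrow> 'k::field) \<Rightarrow> 'k) set" for n :: nat
  where
    pf_const: "(\<lambda>a. c) \<in> poly_fun n"
  | pf_var: "i < n \<Longrightarrow> (\<lambda>a. a i) \<in> poly_fun n"
  | pf_add: "f \<in> poly_fun n \<Longrightarrow> g \<in> poly_fun n \<Longrightarrow> (\<lambda>a. f a + g a) \<in> poly_fun n"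
  | pf_mult: "f \<in> poly_fun n \<Longrightarrow> g \<in> poly_fun n \<Longrightarrow> (\<lambda>a. f a * g a) \<in> poly_fun n"

definition extremal :: "('k::field \<Rightarrow> 'g::linordered_ab_group_add) \<Rightarrow> bool" where
  "extremal v \<longleftrightarrow>
     (\<forall>n::nat. n \<ge> 1 \<longrightarrow> (\<forall>F \<in> poly_fun n.
        (\<exists>a. (\<forall>i<n. a i \<in> val_ring v) \<and>
             (\<forall>b. (\<forall>i<n. b i \<in> val_ring v) \<longrightarrow> ext_le (vext v (F b)) (vext v (F a))))))"

primrec gmul :: "nat \<Rightarrow> 'g::ab_group_add \<Rightarrow> 'g" where
  "gmul 0 x = 0"
| "gmul (Suc n) x = gmul n x + x"

definition divisible_group :: "'g::ab_group_add itself \<Rightarrow> bool" where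
  "divisible_group _ \<longleftrightarrow> (\<forall>n::nat. n \<ge> 1 \<longrightarrow> (\<forall>x::'g. \<exists>y. gmul n y = x))"

definition regular_group :: "'g::linordered_ab_group_add itself \<Rightarrow> bool" where
  "regular_group _ \<longleftrightarrow>
     (\<forall>n::nat. n \<ge> 1 \<longrightarrow> (\<forall>a b :: 'g.
        (\<exists>S. S \<subseteq> {a<..<b} \<and> finite S \<and> card S = n) \<longrightarrow>
        (\<exists>x\<in>{a<..<b}. \<exists>y. x = gmul n y)))"

definition Z_group :: "'g::linordered_ab_group_add itself \<Rightarrow> bool" where
  "Z_group T \<longleftrightarrow> regular_group T \<and> (\<exists>e::'g. 0 < e \<and> (\<forall>x::'g. 0 < x \<longrightarrow> e \<le> x))"

end

theory Submission
  imports Defs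
begin

lemma gmul_zero[simp]: "gmul n (0::'g::ab_group_add) = 0"
  by (induct n) auto

lemma gmul_add_count: "gmul (m + n) (x::'g::ab_group_add) = gmul m x + gmul n x"
  by (induct n) (auto simp: algebra_simps)

lemma gmul_add: "gmul n ((x::'g::ab_group_add) + y) = gmul n x + gmul n y"
  by (induct n) (auto simp: algebra_simps)

lemma gmul_minus: "gmul n (- (x::'g::ab_group_add)) = - gmul n x"
  by (induct n) (auto simp: algebra_simps)

lemma gmul_diff: "gmul n ((x::'g::ab_group_add) - y) = gmul n x - gmul n y"
  using gmul_add[of n x "-y"] gmul_minus[of n y] by simp

lemma gmul_mult: "gmul (m * n) (x::'g::ab_group_add) = gmul m (gmul n x)"
  by (induct m) (auto simp: gmul_add_count algebra_simps)

lemma gmul_one[simp]: "gmul (Suc 0) x = x"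
  by simp

lemma gmul_nonneg: "0 \<le> (x::'g::linordered_ab_group_add) \<Longrightarrow> 0 \<le> gmul n x"
  by (induct n) auto

lemma gmul_pos: "0 < (x::'g::linordered_ab_group_add) \<Longrightarrow> n \<ge> 1 \<Longrightarrow> 0 < gmul n x"
proof (induct n)
  case 0 then show ?case by simp
next
  case (Suc n)
  have "0 \<le> gmul n x" using gmul_nonneg Suc.prems by (metis less_imp_le)
  then show ?case using Suc.prems by (simp add: add_nonneg_pos)
qed

lemma gmul_mono: "(x::'g::linordered_ab_group_add) \<le> y \<Longrightarrow> gmul n x \<le> gmul n y"
  using gmul_nonneg[of "y - x" n] by (simp add: gmul_diff)

lemma gmul_strict: "(x::'g::linordered_ab_group_add) < y \<Longrightarrow> n \<ge> 1 \<Longrightarrow> gmul n x < gmul n y"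
  using gmul_pos[of "y - x" n] by (simp add: gmul_diff)

lemma gmul_ge: "0 \<le> (x::'g::linordered_ab_group_add) \<Longrightarrow> n \<ge> 1 \<Longrightarrow> x \<le> gmul n x"
proof -
  assume "0 \<le> x" "n \<ge> 1"
  then obtain m where "n = Suc m" by (cases n) auto
  then show ?thesis using gmul_nonneg[OF \<open>0 \<le> x\<close>, of m] by simp
qed

lemma gmul_inj: "n \<ge> 1 \<Longrightarrow> gmul n (x::'g::linordered_ab_group_add) = gmul n y \<Longrightarrow> x = y"
  by (metis gmul_strict linorder_neqE less_irrefl)

lemma double_inj: "(a::'g::linordered_ab_group_add) + a = b + b \<Longrightarrow> a = b"
  by (metis add_strict_mono linorder_neqE less_irrefl)

lemma dense_half:
  fixes D :: "'g::linordered_ab_group_add"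
  assumes dense: "\<forall>e::'g>0. \<exists>x>0. x < e" and D: "0 < D"
  shows "\<exists>h>0. h + h \<le> D"
proof -
  obtain x where x: "0 < x" "x < D" using dense D by blast
  define h where "h = min x (D - x)"
  have "h > 0" using x by (simp add: h_def)
  moreover have "h + h \<le> x + (D - x)"
    by (rule add_mono) (auto simp: h_def)
  ultimately show ?thesis by auto
qed

lemma dense_small:
  fixes D :: "'g::linordered_ab_group_add"
  assumes dense: "\<forall>e::'g>0. \<exists>x>0. x < e"
  shows "0 < D \<Longrightarrow> \<exists>h>0. gmul M h < D"
proof (induct M arbitrary: D)
  case 0 then show ?case using dense by auto
next
  case (Suc M)
  obtain h1 where h1: "h1 > 0" "h1 + h1 \<le> D" using dense_half[OF dense Suc.prems] by blast
  obtain h2 where h2: "h2 > 0" "gmul M h2 < h1" using Suc.hyps[OF h1(1)] by blast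
  define h where "h = min h2 h1"
  have "gmul M h \<le> gmul M h2" by (rule gmul_mono) (simp add: h_def)
  then have "gmul M h + h < h1 + h1"
    using h2 by (intro add_less_le_mono) (auto simp: h_def)
  then have "gmul (Suc M) h < D" using h1 by simp
  moreover have "h > 0" using h1 h2 by (simp add: h_def)
  ultimately show ?case by blast
qed

lemma multiples:
  fixes e :: "'g::linordered_ab_group_add"
  assumes e: "e > 0" "\<forall>x>0. e \<le> x"
  shows "0 \<le> D \<Longrightarrow> D \<le> gmul k e \<Longrightarrow> \<exists>j\<le>k. D = gmul j e"
proof (induct k arbitrary: D)
  case 0 then show ?case by auto
next
  case (Suc k)
  show ?case
  proof (cases "D \<le> gmul k e")
    case True then show ?thesis using Suc by (meson le_Suc_eq)
  next
    case False
    then have "0 < D - gmul k e" by simp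
    then have "e \<le> D - gmul k e" using e by blast
    moreover have "D - gmul k e \<le> e" using Suc.prems by (simp add: algebra_simps)
    ultimately have "D = gmul (Suc k) e" by (simp add: algebra_simps)
    then show ?thesis by blast
  qed
qed

lemma tent:
  fixes \<gamma> \<mu> u0 :: "'g::linordered_ab_group_add"
  assumes M: "M \<ge> 1" and ng: "\<not>(\<exists>z. \<gamma> = gmul M z)"
    and mu: "0 \<le> \<mu>" "\<gamma> \<le> gmul M \<mu>" "- \<gamma> \<le> gmul M \<mu>"
    and u0: "0 \<le> u0" "u0 \<le> \<mu>"
    and mx: "\<forall>\<delta>. 0 \<le> \<delta> \<longrightarrow> \<delta> \<le> \<mu> \<longrightarrow>
      min (gmul M \<delta>) (\<gamma> + gmul M (\<mu> - \<delta>)) \<le> min (gmul M u0) (\<gamma> + gmul M (\<mu> - u0))"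
  shows "\<exists>e>0. (\<forall>x>0. e \<le> x) \<and> (\<exists>j z. \<gamma> - gmul j e = gmul M z)"
proof -
  define D where "D = \<gamma> + gmul M (\<mu> - u0) - gmul M u0"
  have Dnz: "D \<noteq> 0"
  proof
    assume "D = 0"
    then have "\<gamma> = gmul M (u0 - (\<mu> - u0))" by (simp add: D_def gmul_diff gmul_add algebra_simps)
    then show False using ng by blast
  qed
  have disc: "\<exists>e::'g>0. \<forall>x>0. e \<le> x" if small: "\<forall>h. 0 < h \<longrightarrow> h \<le> w \<longrightarrow> P \<le> gmul M h"
    and w: "0 < w" and P: "0 < P" for w P :: 'g
  proof (rule ccontr)
    assume "\<not> ?thesis"
    then have dense: "\<forall>e::'g>0. \<exists>x>0. x < e" by (metis not_le)
    obtain h where h: "h > 0" "gmul M h < P" using dense_small[OF dense P] by blast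
    define h' where "h' = min h w"
    have "gmul M h' \<le> gmul M h" by (rule gmul_mono) (simp add: h'_def)
    moreover have "0 < h'" "h' \<le> w" using h w by (auto simp: h'_def)
    ultimately show False using small h by force
  qed
  show ?thesis
  proof (cases "D > 0")
    case True
    have w0: "0 < \<mu> - u0"
    proof (rule ccontr)
      assume "\<not> 0 < \<mu> - u0"
      then have "u0 = \<mu>" using u0 by simp
      then have "D = \<gamma> - gmul M \<mu>" by (simp add: D_def)
      then show False using True mu by simp
    qed
    have RHS: "min (gmul M u0) (\<gamma> + gmul M (\<mu> - u0)) = gmul M u0"
      using True by (simp add: D_def)
    have small: "\<forall>h. 0 < h \<longrightarrow> h \<le> \<mu> - u0 \<longrightarrow> D \<le> gmul M h"
    proof (intro allI impI)
      fix h assume h: "0 < h" "h \<le> \<mu> - u0"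
      show "D \<le> gmul M h"
      proof (rule ccontr)
        assume "\<not> D \<le> gmul M h"
        then have lt: "gmul M h < D" by simp
        have "min (gmul M (u0 + h)) (\<gamma> + gmul M (\<mu> - (u0 + h))) \<le> gmul M u0"
          using mx[rule_format, of "u0 + h"] RHS h u0 by (simp add: algebra_simps)
        moreover have "gmul M u0 < gmul M (u0 + h)"
          using gmul_pos[OF h(1) M] by (simp add: gmul_add)
        moreover have "gmul M u0 < \<gamma> + gmul M (\<mu> - (u0 + h))"
          using lt by (simp add: D_def gmul_diff gmul_add algebra_simps)
        ultimately show False by (auto simp: min_le_iff_disj)
      qed
    qed
    obtain e :: 'g where e: "e > 0" "\<forall>x>0. e \<le> x" using disc[OF small w0 True] by blast
    have "D \<le> gmul M e" using small e w0 by blast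
    then obtain j where j: "D = gmul j e" using multiples[OF e, of D M] True less_imp_le by blast
    have "\<gamma> - gmul j e = gmul M (u0 - (\<mu> - u0))"
      by (simp add: j[symmetric] D_def gmul_diff gmul_add algebra_simps)
    then show ?thesis using e by blast
  next
    case False
    then have Dn: "D < 0" using Dnz by simp
    have u0p: "0 < u0"
    proof (rule ccontr)
      assume "\<not> 0 < u0"
      then have "u0 = 0" using u0 by simp
      then have "D = \<gamma> + gmul M \<mu>" by (simp add: D_def)
      then show False using Dn add_left_mono[OF mu(3), of \<gamma>] by simp
    qed
    have RHS: "min (gmul M u0) (\<gamma> + gmul M (\<mu> - u0)) = \<gamma> + gmul M (\<mu> - u0)"
      using Dn by (simp add: D_def)
    have small: "\<forall>h. 0 < h \<longrightarrow> h \<le> u0 \<longrightarrow> - D \<le> gmul M h"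
    proof (intro allI impI)
      fix h assume h: "0 < h" "h \<le> u0"
      show "- D \<le> gmul M h"
      proof (rule ccontr)
        assume "\<not> - D \<le> gmul M h"
        then have lt: "gmul M h < - D" by simp
        have "min (gmul M (u0 - h)) (\<gamma> + gmul M (\<mu> - (u0 - h))) \<le> \<gamma> + gmul M (\<mu> - u0)"
          using mx[rule_format, of "u0 - h"] RHS h u0 add_increasing2[OF less_imp_le[OF h(1)] u0(2)] by (simp add: algebra_simps)
        moreover have "\<gamma> + gmul M (\<mu> - u0) < gmul M (u0 - h)"
          using lt by (simp add: D_def gmul_diff gmul_add algebra_simps)
        moreover have "\<gamma> + gmul M (\<mu> - u0) < \<gamma> + gmul M (\<mu> - (u0 - h))"
          using gmul_pos[OF h(1) M] by (simp add: gmul_diff gmul_add algebra_simps)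
        ultimately show False by (auto simp: min_le_iff_disj)
      qed
    qed
    have nD: "0 < - D" using Dn by simp
    obtain e :: 'g where e: "e > 0" "\<forall>x>0. e \<le> x" using disc[OF small u0p nD] by blast
    have "- D \<le> gmul M e" using small e u0p by blast
    then obtain j where j: "- D = gmul j e" "j \<le> M" using multiples[OF e, of "- D" M] nD less_imp_le by blast
    have split: "gmul M e = gmul (M - j) e + gmul j e"
      using gmul_add_count[of "M - j" j e] j(2) by simp
    have "\<gamma> - gmul (M - j) e = gmul M (u0 - (\<mu> - u0) - e)"
      using j(1) split by (simp add: D_def gmul_diff gmul_add algebra_simps)
    then show ?thesis using e by blast
  qed
qed

context
  fixes v :: "'k::field \<Rightarrow> 'g::linordered_ab_group_add"
  assumes V: "valuation v"
begin

lemma vmult: "x \<noteq> 0 \<Longrightarrow> y \<noteq> 0 \<Longrightarrow> v (x * y) = v x + v y"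
  using V by (simp add: valuation_def)

lemma vultra: "x \<noteq> 0 \<Longrightarrow> y \<noteq> 0 \<Longrightarrow> x + y \<noteq> 0 \<Longrightarrow> min (v x) (v y) \<le> v (x + y)"
  using V by (simp add: valuation_def)

lemma vsurj: "\<exists>x. x \<noteq> 0 \<and> v x = g"
proof -
  have "g \<in> v ` {x. x \<noteq> 0}" using V by (simp add: valuation_def)
  then show ?thesis by auto
qed

lemma v1: "v 1 = 0"
  using vmult[of 1 1] by simp

lemma vm1: "v (-1) = 0"
  using vmult[of "-1" "-1"] v1 double_inj[of "v (-1)" 0] by simp

lemma vneg: "x \<noteq> 0 \<Longrightarrow> v (- x) = v x"
  using vmult[of "-1" x] vm1 by simp

lemma vinv: "x \<noteq> 0 \<Longrightarrow> v (inverse x) = - v x"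
  using vmult[of x "inverse x"] v1 by (simp add: eq_neg_iff_add_eq_0 add.commute)

lemma vpow: "x \<noteq> 0 \<Longrightarrow> v (x ^ n) = gmul n (v x)"
  by (induct n) (auto simp: v1 vmult algebra_simps)

lemma vstrict: "s \<noteq> 0 \<Longrightarrow> t \<noteq> 0 \<Longrightarrow> v s < v t \<Longrightarrow> s + t \<noteq> 0 \<and> v (s + t) = v s"
proof -
  assume s: "s \<noteq> 0" and t: "t \<noteq> 0" and lt: "v s < v t"
  have st: "s + t \<noteq> 0"
  proof
    assume "s + t = 0"
    then have "t = - s" by (simp add: eq_neg_iff_add_eq_0 add.commute)
    then show False using lt vneg[OF s] by simp
  qed
  have "min (v s) (v t) \<le> v (s + t)" using vultra[OF s t st] .
  then have le1: "v s \<le> v (s + t)" using lt by simp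
  have "min (v (s + t)) (v (- t)) \<le> v (s + t + - t)"
    using vultra[of "s + t" "- t"] st t s by simp
  then have "min (v (s + t)) (v t) \<le> v s" using vneg[OF t] by simp
  then have "v (s + t) \<le> v s" using lt by (auto simp: min_le_iff_disj)
  then show ?thesis using le1 st by simp
qed

lemma vdom:
  assumes s: "s \<noteq> 0" and t: "t = 0 \<or> v s < v t" and u: "u = 0 \<or> v s < v u"
  shows "s + t + u \<noteq> 0 \<and> v (s + t + u) = v s"
proof (cases "t + u = 0")
  case True
  then show ?thesis using s by (simp add: add.assoc)
next
  case False
  have "v s < v (t + u)"
  proof (cases "t = 0")
    case True then show ?thesis using u False by auto
  next
    case tnz: False
    show ?thesis
    proof (cases "u = 0")
      case True then show ?thesis using t tnz by auto
    next
      case unz: False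
      have "min (v t) (v u) \<le> v (t + u)" using vultra[OF tnz unz False] .
      then show ?thesis using t u tnz unz by (auto simp: min_le_iff_disj)
    qed
  qed
  then show ?thesis using vstrict[OF s False] by (simp add: add.assoc)
qed

lemma vthree:
  assumes nz: "p \<noteq> 0 \<or> q \<noteq> 0 \<or> r \<noteq> 0"
    and d12: "p \<noteq> 0 \<Longrightarrow> q \<noteq> 0 \<Longrightarrow> v p \<noteq> v q"
    and d13: "p \<noteq> 0 \<Longrightarrow> r \<noteq> 0 \<Longrightarrow> v p \<noteq> v r"
    and d23: "q \<noteq> 0 \<Longrightarrow> r \<noteq> 0 \<Longrightarrow> v q \<noteq> v r"
  shows "p + q + r \<noteq> 0 \<and> (p \<noteq> 0 \<longrightarrow> v (p + q + r) \<le> v p)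
     \<and> (q \<noteq> 0 \<longrightarrow> v (p + q + r) \<le> v q) \<and> (r \<noteq> 0 \<longrightarrow> v (p + q + r) \<le> v r)"
proof -
  have c: "(p \<noteq> 0 \<and> (q = 0 \<or> v p < v q) \<and> (r = 0 \<or> v p < v r)) \<or>
        (q \<noteq> 0 \<and> (p = 0 \<or> v q < v p) \<and> (r = 0 \<or> v q < v r)) \<or>
        (r \<noteq> 0 \<and> (p = 0 \<or> v r < v p) \<and> (q = 0 \<or> v r < v q))"
    using nz d12 d13 d23
    by (cases "p = 0"; cases "q = 0"; cases "r = 0")
       (auto simp: linorder_neq_iff dest: order.strict_trans)
  have e1: "p + q + r = q + p + r" "p + q + r = r + p + q" by (simp_all add: algebra_simps)
  show ?thesis
    using c
  proof (elim disjE)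
    assume h: "p \<noteq> 0 \<and> (q = 0 \<or> v p < v q) \<and> (r = 0 \<or> v p < v r)"
    then show ?thesis using vdom[of p q r] by auto
  next
    assume h: "q \<noteq> 0 \<and> (p = 0 \<or> v q < v p) \<and> (r = 0 \<or> v q < v r)"
    have eq: "p + q + r = q + p + r" by (simp add: add.commute)
    show ?thesis unfolding eq using vdom[of q p r] h by auto
  next
    assume h: "r \<noteq> 0 \<and> (p = 0 \<or> v r < v p) \<and> (q = 0 \<or> v r < v q)"
    have eq: "p + q + r = r + p + q" by (simp add: algebra_simps)
    show ?thesis unfolding eq using vdom[of r p q] h by auto
  qed
qed

end

lemma pf_pow: "f \<in> poly_fun n \<Longrightarrow> (\<lambda>a. f a ^ k) \<in> poly_fun n"
proof (induct k)
  case 0 then show ?case using poly_fun.pf_const[of 1 n] by simp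
next
  case (Suc k)
  then show ?case using poly_fun.pf_mult[OF Suc.prems Suc.hyps[OF Suc.prems]] by simp
qed

lemma ext_le_Some: "ext_le (Some a) (Some b) \<longleftrightarrow> a \<le> b"
  by (simp add: ext_le_def)

lemma key:
  fixes v :: "'k::field \<Rightarrow> 'g::linordered_ab_group_add"
  assumes V: "valuation v" and E: "extremal v" and N: "N \<ge> 1"
    and ngN: "\<not>(\<exists>z. \<gamma> = gmul N z)"
  shows "\<exists>e::'g>0. (\<forall>x>0. e \<le> x) \<and> (\<exists>j z. \<gamma> - gmul j e = gmul (2*N) z)"
proof -
  define M where "M = 2 * N"
  have M1: "M \<ge> 1" using N by (simp add: M_def)
  have ng: "\<not>(\<exists>z. \<gamma> = gmul M z)"
  proof
    assume "\<exists>z. \<gamma> = gmul M z"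
    then obtain z where "\<gamma> = gmul M z" by blast
    then have "\<gamma> = gmul N (gmul 2 z)" using gmul_mult[of N 2 z] by (simp add: M_def mult.commute)
    then show False using ngN by blast
  qed
  have ng2: "\<not>(\<exists>z. \<gamma> + \<gamma> = gmul M z)"
  proof
    assume "\<exists>z. \<gamma> + \<gamma> = gmul M z"
    then obtain z where "\<gamma> + \<gamma> = gmul M z" by blast
    then have "\<gamma> + \<gamma> = gmul N z + gmul N z" using gmul_mult[of 2 N z]
      by (simp add: M_def numeral_2_eq_2)
    then have "\<gamma> = gmul N z" by (rule double_inj)
    then show False using ngN by blast
  qed
  have g0: "\<gamma> \<noteq> 0" using ngN gmul_zero[of N] by metis
  define \<mu> where "\<mu> = max \<gamma> (- \<gamma>)"
  have mupos: "0 < \<mu>" using g0 by (auto simp: \<mu>_def max_def neg_less_0_iff_less)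
  have mu_ge: "\<mu> \<le> gmul M \<mu>" using gmul_ge[of \<mu> M] mupos M1 by simp
  have g_le: "\<gamma> \<le> gmul M \<mu>" "- \<gamma> \<le> gmul M \<mu>" using mu_ge by (auto simp: \<mu>_def)
  define \<kappa> where "\<kappa> = \<mu> + \<mu> + \<mu> + \<mu>"
  define \<epsilon> where "\<epsilon> = \<gamma> + \<gamma> - gmul M \<kappa>"
  obtain b where b: "b \<noteq> 0" "v b = \<gamma>" using vsurj[OF V] by blast
  obtain c where c: "c \<noteq> 0" "v c = \<mu>" using vsurj[OF V] by blast
  obtain d where d: "d \<noteq> 0" "v d = \<epsilon>" using vsurj[OF V] by blast
  define F where "F = (\<lambda>a::nat \<Rightarrow> 'k. a 0 ^ M + b * a 1 ^ M + d * (a 0 * a 1 - c) ^ M)"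
  have F: "F \<in> poly_fun 2"
  proof -
    have x: "(\<lambda>a::nat \<Rightarrow> 'k. a 0) \<in> poly_fun 2" by (rule poly_fun.pf_var) simp
    have y: "(\<lambda>a::nat \<Rightarrow> 'k. a 1) \<in> poly_fun 2" by (rule poly_fun.pf_var) simp
    have xy: "(\<lambda>a::nat \<Rightarrow> 'k. a 0 * a 1 + (- c)) \<in> poly_fun 2"
      using poly_fun.pf_add[OF poly_fun.pf_mult[OF x y] poly_fun.pf_const[of "- c"]] by simp
    have t1: "(\<lambda>a::nat \<Rightarrow> 'k. a 0 ^ M) \<in> poly_fun 2" using pf_pow[OF x] by simp
    have t2: "(\<lambda>a::nat \<Rightarrow> 'k. b * a 1 ^ M) \<in> poly_fun 2"
      using poly_fun.pf_mult[OF poly_fun.pf_const pf_pow[OF y]] by simp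
    have t3: "(\<lambda>a::nat \<Rightarrow> 'k. d * (a 0 * a 1 + - c) ^ M) \<in> poly_fun 2"
      using poly_fun.pf_mult[OF poly_fun.pf_const pf_pow[OF xy]] by simp
    show ?thesis using poly_fun.pf_add[OF poly_fun.pf_add[OF t1 t2] t3] by (simp add: F_def)
  qed
  obtain a where aO: "\<forall>i<2. a i \<in> val_ring v"
    and amax: "\<forall>p. (\<forall>i<2. p i \<in> val_ring v) \<longrightarrow> ext_le (vext v (F p)) (vext v (F a))"
    using E[unfolded extremal_def, rule_format, of 2 F] F by auto
  have d12: "gmul M u \<noteq> \<gamma> + gmul M w" for u w
  proof
    assume "gmul M u = \<gamma> + gmul M w"
    then have "\<gamma> = gmul M (u - w)" by (simp add: gmul_diff algebra_simps)
    then show False using ng by blast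
  qed
  have d13: "gmul M u \<noteq> \<epsilon> + gmul M t" for u t
  proof
    assume "gmul M u = \<epsilon> + gmul M t"
    then have "\<gamma> + \<gamma> = gmul M (u + \<kappa> - t)" by (simp add: \<epsilon>_def gmul_diff gmul_add algebra_simps)
    then show False using ng2 by blast
  qed
  have d23: "\<gamma> + gmul M w \<noteq> \<epsilon> + gmul M t" for w t
  proof
    assume "\<gamma> + gmul M w = \<epsilon> + gmul M t"
    then have "\<gamma> = gmul M (w + \<kappa> - t)" by (simp add: \<epsilon>_def gmul_diff gmul_add algebra_simps)
    then show False using ng by blast
  qed
  have eval: "F p \<noteq> 0 \<and> (p 0 \<noteq> 0 \<longrightarrow> v (F p) \<le> gmul M (v (p 0)))
      \<and> (p 1 \<noteq> 0 \<longrightarrow> v (F p) \<le> \<gamma> + gmul M (v (p 1)))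
      \<and> (p 0 * p 1 - c \<noteq> 0 \<longrightarrow> v (F p) \<le> \<epsilon> + gmul M (v (p 0 * p 1 - c)))" for p
  proof -
    let ?x = "p 0" and ?y = "p 1" and ?z = "p 0 * p 1 - c"
    have z1: "?x ^ M \<noteq> 0 \<longleftrightarrow> ?x \<noteq> 0" using M1 by simp
    have z2: "b * ?y ^ M \<noteq> 0 \<longleftrightarrow> ?y \<noteq> 0" using M1 b by simp
    have z3: "d * ?z ^ M \<noteq> 0 \<longleftrightarrow> ?z \<noteq> 0" using M1 d by simp
    have v1': "?x \<noteq> 0 \<Longrightarrow> v (?x ^ M) = gmul M (v ?x)" using vpow[OF V] by blast
    have v2': "?y \<noteq> 0 \<Longrightarrow> v (b * ?y ^ M) = \<gamma> + gmul M (v ?y)"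
      using vpow[OF V] vmult[OF V] b by simp
    have v3': "?z \<noteq> 0 \<Longrightarrow> v (d * ?z ^ M) = \<epsilon> + gmul M (v ?z)"
      using vpow[OF V] vmult[OF V] d by simp
    have nz: "?x ^ M \<noteq> 0 \<or> b * ?y ^ M \<noteq> 0 \<or> d * ?z ^ M \<noteq> 0"
      using z1 z2 z3 c by auto
    have th: "?x ^ M + b * ?y ^ M + d * ?z ^ M \<noteq> 0 \<and>
      (?x ^ M \<noteq> 0 \<longrightarrow> v (?x ^ M + b * ?y ^ M + d * ?z ^ M) \<le> v (?x ^ M)) \<and>
      (b * ?y ^ M \<noteq> 0 \<longrightarrow> v (?x ^ M + b * ?y ^ M + d * ?z ^ M) \<le> v (b * ?y ^ M)) \<and>
      (d * ?z ^ M \<noteq> 0 \<longrightarrow> v (?x ^ M + b * ?y ^ M + d * ?z ^ M) \<le> v (d * ?z ^ M))"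
      by (rule vthree[OF V nz]) (use z1 z2 z3 v1' v2' v3' d12 d13 d23 in auto)
    then show ?thesis using z1 z2 z3 v1' v2' v3' by (simp add: F_def)
  qed
  have Fa: "F a \<noteq> 0" using eval by blast
  define w where "w = v (F a)"
  have vextFa: "vext v (F a) = Some w" using Fa by (simp add: vext_def w_def)
  have lower: "min (gmul M \<delta>) (\<gamma> + gmul M (\<mu> - \<delta>)) \<le> w" if "0 \<le> \<delta>" "\<delta> \<le> \<mu>" for \<delta>
  proof -
    obtain t where t: "t \<noteq> 0" "v t = \<delta>" using vsurj[OF V] by blast
    define y where "y = c * inverse t"
    have y0: "y \<noteq> 0" using t c by (simp add: y_def)
    have vy: "v y = \<mu> - \<delta>" using vmult[OF V, of c "inverse t"] vinv[OF V t(1)] t c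
      by (simp add: y_def)
    define p where "p = (\<lambda>i::nat. if i = 0 then t else y)"
    have pO: "\<forall>i<2. p i \<in> val_ring v"
      using that t vy by (auto simp: p_def val_ring_def)
    have ty: "t * y = c" using t by (simp add: y_def)
    have Fp: "F p = t ^ M + b * y ^ M" using ty M1 by (simp add: F_def p_def)
    have n1: "t ^ M \<noteq> 0" "b * y ^ M \<noteq> 0" using t y0 b by auto
    have vv: "v (t ^ M) = gmul M \<delta>" "v (b * y ^ M) = \<gamma> + gmul M (\<mu> - \<delta>)"
      using vpow[OF V] vmult[OF V] t y0 b vy n1 by auto
    have val: "v (F p) = min (gmul M \<delta>) (\<gamma> + gmul M (\<mu> - \<delta>))"
    proof (cases "gmul M \<delta> < \<gamma> + gmul M (\<mu> - \<delta>)")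
      case True
      then show ?thesis using vstrict[OF V n1(1) n1(2)] vv Fp by simp
    next
      case False
      then have lt: "\<gamma> + gmul M (\<mu> - \<delta>) < gmul M \<delta>" using d12[of \<delta> "\<mu> - \<delta>"] by simp
      then show ?thesis using vstrict[OF V n1(2) n1(1)] vv Fp by (simp add: add.commute)
    qed
    have "F p \<noteq> 0" using eval by blast
    then have "ext_le (Some (v (F p))) (Some w)" using amax pO vextFa by (metis vext_def)
    then show ?thesis using val by (simp add: ext_le_Some)
  qed
  have w0: "0 \<le> w"
  proof -
    have "min (gmul M 0) (\<gamma> + gmul M (\<mu> - 0)) \<le> w" using lower[of 0] mupos by simp
    moreover have "0 \<le> \<gamma> + gmul M \<mu>" using add_left_mono[OF g_le(2), of \<gamma>] by simp
    ultimately show ?thesis by simp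
  qed
  have eps_neg: "\<epsilon> + gmul M \<mu> < 0"
  proof -
    have "\<epsilon> + gmul M \<mu> = (\<gamma> - gmul M \<mu>) + (\<gamma> - gmul M \<mu>) - gmul M \<mu>"
      by (simp add: \<epsilon>_def \<kappa>_def gmul_add algebra_simps)
    moreover have "\<gamma> - gmul M \<mu> \<le> 0" using g_le by simp
    moreover have "0 < gmul M \<mu>" using gmul_pos[OF mupos M1] .
    ultimately show ?thesis
      by (metis add_nonpos_nonpos diff_less_0_iff_less le_less_trans less_le_not_le)
  qed
  let ?x = "a 0" and ?y = "a 1"
  have xO: "?x \<in> val_ring v" and yO: "?y \<in> val_ring v" using aO by auto
  show ?thesis
  proof (cases "?x * ?y = c \<or> \<mu> < v (?x * ?y - c)")
    case False
    then have z: "?x * ?y - c \<noteq> 0" "v (?x * ?y - c) \<le> \<mu>" by auto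
    have "w \<le> \<epsilon> + gmul M (v (?x * ?y - c))" using eval[of a] z by (simp add: w_def)
    also have "\<dots> \<le> \<epsilon> + gmul M \<mu>" using gmul_mono[OF z(2)] by simp
    finally show ?thesis using eps_neg w0 by simp
  next
    case True
    have xy: "?x * ?y \<noteq> 0 \<and> v (?x * ?y) = \<mu>"
    proof (cases "?x * ?y = c")
      case True then show ?thesis using c by simp
    next
      case False
      then have zz: "?x * ?y - c \<noteq> 0" "\<mu> < v (?x * ?y - c)" using \<open>?x * ?y = c \<or> _\<close> by auto
      have "c + (?x * ?y - c) \<noteq> 0 \<and> v (c + (?x * ?y - c)) = v c"
        using vstrict[OF V c(1) zz(1)] zz c by simp
      then show ?thesis using c by simp
    qed
    then have x0: "?x \<noteq> 0" and y0: "?y \<noteq> 0" by auto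
    have sum: "v ?x + v ?y = \<mu>" using xy vmult[OF V x0 y0] by simp
    define u0 where "u0 = v ?x"
    have u0ge: "0 \<le> u0" using xO x0 by (simp add: val_ring_def u0_def)
    have vyge: "0 \<le> v ?y" using yO y0 by (simp add: val_ring_def)
    have vy: "v ?y = \<mu> - u0" using sum by (simp add: u0_def algebra_simps)
    have u0le: "u0 \<le> \<mu>" using vyge vy by simp
    have up: "w \<le> min (gmul M u0) (\<gamma> + gmul M (\<mu> - u0))"
      using eval[of a] x0 y0 vy by (simp add: w_def u0_def)
    have mx: "\<forall>\<delta>. 0 \<le> \<delta> \<longrightarrow> \<delta> \<le> \<mu> \<longrightarrow>
      min (gmul M \<delta>) (\<gamma> + gmul M (\<mu> - \<delta>)) \<le> min (gmul M u0) (\<gamma> + gmul M (\<mu> - u0))"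
      using lower up order_trans by blast
    show ?thesis
      using tent[OF M1 ng less_imp_le[OF mupos] g_le u0ge u0le mx] by (simp add: M_def)
  qed
qed

lemma chain:
  fixes e a :: "'g::linordered_ab_group_add"
  assumes e: "e > 0" "\<forall>x>0. e \<le> x"
  shows "finite S \<Longrightarrow> card S = n \<Longrightarrow> n \<ge> 1 \<Longrightarrow> S \<subseteq> {a<..} \<Longrightarrow> \<exists>s\<in>S. a + gmul n e \<le> s"
proof (induct n arbitrary: S)
  case 0 then show ?case by simp
next
  case (Suc n)
  have ne: "S \<noteq> {}" using Suc.prems by auto
  define s where "s = Max S"
  have sS: "s \<in> S" using Max_in[OF Suc.prems(1) ne] by (simp add: s_def)
  show ?case
  proof (cases "n = 0")
    case True
    have "a < s" using sS Suc.prems(4) by auto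
    then have "e \<le> s - a" using e by simp
    then show ?thesis using sS True by (auto simp: algebra_simps)
  next
    case False
    have "finite (S - {s})" "card (S - {s}) = n" "n \<ge> 1" "S - {s} \<subseteq> {a<..}"
      using Suc.prems sS False by auto
    then obtain s' where s': "s' \<in> S - {s}" "a + gmul n e \<le> s'" using Suc.hyps by blast
    have "s' \<le> s" using s' Max_ge[OF Suc.prems(1)] by (auto simp: s_def)
    then have "s' < s" using s' by auto
    then have "e \<le> s - s'" using e by simp
    then have "a + gmul n e + e \<le> s' + (s - s')" using s' add_mono by blast
    then show ?thesis using sS by (auto simp: add.assoc)
  qed
qed

theorem theorem3p6:
  fixes v :: "'k::field \<Rightarrow> 'g::linordered_ab_group_add"
  assumes "valuation v"
    and "extremal v"
  shows "divisible_group TYPE('g) \<or> Z_group TYPE('g)"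
proof (cases "divisible_group TYPE('g)")
  case True then show ?thesis by simp
next
  case False
  then obtain N and \<gamma> :: 'g where N: "N \<ge> 1" and ng: "\<not>(\<exists>z. \<gamma> = gmul N z)"
    unfolding divisible_group_def by (metis (full_types))
  obtain e :: 'g where e: "e > 0" "\<forall>x>0. e \<le> x"
    using key[OF assms N ng] by blast
  have allg: "\<exists>j z. g - gmul j e = gmul n z" if n: "n \<ge> 1" for n and g :: 'g
  proof (cases "\<exists>z. g = gmul n z")
    case True
    then obtain z where "g = gmul n z" by blast
    then have "g - gmul 0 e = gmul n z" by simp
    then show ?thesis by blast
  next
    case False
    obtain e' :: 'g where e': "e' > 0" "\<forall>x>0. e' \<le> x" and jz: "\<exists>j z. g - gmul j e' = gmul (2*n) z"
      using key[OF assms n False] by blast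
    have "e' = e" using e e' by (meson antisym)
    then obtain j z where "g - gmul j e = gmul (2*n) z" using jz by blast
    then have "g - gmul j e = gmul n (gmul 2 z)" using gmul_mult[of n 2 z] by (simp add: mult.commute)
    then show ?thesis by blast
  qed
  have reg: "regular_group TYPE('g)"
    unfolding regular_group_def
  proof (intro allI impI)
    fix n :: nat and a b :: 'g
    assume n: "n \<ge> 1" and "\<exists>S. S \<subseteq> {a<..<b} \<and> finite S \<and> card S = n"
    then obtain S where S: "S \<subseteq> {a<..<b}" "finite S" "card S = n" by blast
    obtain s where s: "s \<in> S" "a + gmul n e \<le> s"
    proof -
      have "S \<subseteq> {a<..}" using S(1) by auto
      then show ?thesis using chain[OF e S(2) S(3) n] that by blast
    qed
    have lt: "a + gmul n e < b" using s S(1) by (meson greaterThanLessThan_iff le_less_trans subsetD)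
    obtain j z where jz: "a + gmul n e - gmul j e = gmul n z" using allg[OF n] by blast
    define r where "r = j mod n"
    define q where "q = j div n"
    have rn: "r < n" using n by (simp add: r_def)
    have jqr: "j = n * q + r" by (simp add: r_def q_def)
    have s1: "gmul j e = gmul n (gmul q e) + gmul r e"
      using jqr gmul_add_count[of "n*q" r e] gmul_mult[of n q e] by simp
    have s2: "gmul n e = gmul (n - r) e + gmul r e"
      using gmul_add_count[of "n - r" r e] rn by simp
    define x where "x = a + gmul (n - r) e"
    have xdiv: "x = gmul n (z + gmul q e)"
      using jz s1 s2 by (simp add: x_def gmul_add algebra_simps)
    have "0 < gmul (n - r) e" using gmul_pos[OF e(1)] rn by simp
    then have ax: "a < x" by (simp add: x_def)
    have "0 \<le> gmul r e" using gmul_nonneg e(1) less_imp_le by blast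
    then have "x \<le> a + gmul n e" using s2 by (simp add: x_def)
    then have xb: "x < b" using lt by simp
    show "\<exists>x\<in>{a<..<b}. \<exists>y. x = gmul n y" using ax xb xdiv by auto
  qed
  have "Z_group TYPE('g)" unfolding Z_group_def using reg e by blast
  then show ?thesis by simp
qed

end
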